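(* Let $f\in\mathrm{Homeo}_+(\mathbb{R})$ satisfy $f(x+1)=f(x)+2$ for all $x$ and $f(0)=0$, and let $\theta_f$ be defined on $PL_2(\mathbb{R})$ as in the context. Then for every $h\in PL_2(\mathbb{R})$, $\theta_f(h)$ is a self-homeomorphism of $\mathbb{R}$.
   Context: $\mathbb{Q}_2$ denotes the dyadic rationals. $GA(\mathbb{Q}_2)$ is the group of affine maps $x\mapsto 2^nx+r$ ($n\in\mathbb{Z}$, $r\in\mathbb{Q}_2$); $T_r(x)=x+r$, $D(x)=2x$. There is a unique injective homomorphism $\theta_f:GA(\mathbb{Q}_2)\to\mathrm{Homeo}_+(\mathbb{R})$ with $\theta_f(T_1)=T_1$, $\theta_f(D)=f$. For $r=p/2^q\in\mathbb{Q}_2$ put $\bar r=f^{-q}(p)$ (well defined, strictly increasing). $PL_2(\mathbb{R})$ is the group of homeomorphisms $h$ of $\mathbb{R}$ that are piecewise linear with a locally finite set of break points, all in $\mathbb{Q}_2$, such that near each non-break point $h$ agrees with an element of $GA(\mathbb{Q}_2)$. For $h\in PL_2(\mathbb{R})$ choose a strictly increasing sequence $(x_n)_{n\in\mathbb{Z}}$ in $\mathbb{Q}_2$ with $x_n\to\pm\infty$ as $n\to\pm\infty$ and $\gamma_n\in GA(\mathbb{Q}_2)$ with $h=\gamma_n$ on $[x_n,x_{n+1}]$, and define $\theta_f(h)(t)=\theta_f(\gamma_n)(t)$ for $t\in[\bar x_n,\bar x_{n+1})$; this is independent of the choices. *)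

theory Defs
  imports "HOL-Analysis.Analysis"
begin

definition dyadic :: "real set" where
  "dyadic = {r. \<exists>(p::int) (q::nat). r = of_int p / 2 ^ q}"

definition fpow :: "(real \<Rightarrow> real) \<Rightarrow> int \<Rightarrow> real \<Rightarrow> real" where
  "fpow f n = (if 0 \<le> n then f ^^ nat n else inv f ^^ nat (- n))"

definition dbar :: "(real \<Rightarrow> real) \<Rightarrow> real \<Rightarrow> real" where
  "dbar f r = (THE y. \<exists>(p::int) (q::nat). r = of_int p / 2 ^ q \<and> y = (inv f ^^ q) (of_int p))"

text \<open>theta_f(T_r) = f^{-q} o T_p o f^q for r = p/2^q
  (forced by theta_f(T_1)=T_1, theta_f(D)=f and T_{p/2^q} = D^{-q} T_p D^q).\<close>
definition theta_T :: "(real \<Rightarrow> real) \<Rightarrow> real \<Rightarrow> real \<Rightarrow> real" where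
  "theta_T f r = (THE g. \<exists>(p::int) (q::nat). r = of_int p / 2 ^ q \<and>
      g = (inv f ^^ q) \<circ> (\<lambda>t. t + of_int p) \<circ> (f ^^ q))"

text \<open>theta_f of the affine map x \<mapsto> 2^n x + r = T_r o D^n.\<close>
definition theta_GA :: "(real \<Rightarrow> real) \<Rightarrow> int \<Rightarrow> real \<Rightarrow> real \<Rightarrow> real" where
  "theta_GA f n r = theta_T f r \<circ> fpow f n"

definition PL2 :: "(real \<Rightarrow> real) set" where
  "PL2 = {h. (\<exists>g. homeomorphism UNIV UNIV h g) \<and>
     (\<exists>B. B \<subseteq> dyadic \<and> (\<forall>y. \<exists>e>0. finite (B \<inter> ball y e)) \<and>
        (\<forall>y. y \<notin> B \<longrightarrow> (\<exists>e>0. \<exists>(n::int) r. r \<in> dyadic \<and>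
              (\<forall>z\<in>ball y e. h z = 2 powi n * z + r))))}"

definition PL_decomp :: "(real \<Rightarrow> real) \<Rightarrow> (int \<Rightarrow> real) \<Rightarrow> (int \<Rightarrow> int) \<Rightarrow> (int \<Rightarrow> real) \<Rightarrow> bool" where
  "PL_decomp h x a b \<longleftrightarrow> strict_mono x \<and> (\<forall>k. x k \<in> dyadic) \<and>
     filterlim x at_top at_top \<and> filterlim x at_bot at_bot \<and>
     (\<forall>k. b k \<in> dyadic) \<and>
     (\<forall>k. \<forall>z\<in>{x k..x (k+1)}. h z = 2 powi (a k) * z + b k)"

text \<open>theta_f(h)(t) = theta_f(gamma_k)(t) for t in [bar x_k, bar x_{k+1});
  the paper asserts independence of the choices, so any choice is taken.\<close>
definition theta_PL :: "(real \<Rightarrow> real) \<Rightarrow> (real \<Rightarrow> real) \<Rightarrow> real \<Rightarrow> real" where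
  "theta_PL f h t = (SOME y. \<exists>x a b k. PL_decomp h x a b \<and>
      dbar f (x k) \<le> t \<and> t < dbar f (x (k+1)) \<and> y = theta_GA f (a k) (b k) t)"

end

theory Submission
  imports Defs
begin



lemma strict_mono_funpow: "strict_mono (g::real\<Rightarrow>real) \<Longrightarrow> strict_mono (g ^^ n)"
  by (induction n) (auto simp: strict_mono_def)

lemma cont_funpow: "continuous_on UNIV (g::real\<Rightarrow>real) \<Longrightarrow> continuous_on UNIV (g ^^ n)"
proof (induction n)
  case 0 then show ?case by (simp add: continuous_on_id')
next
  case (Suc n)
  then show ?case by (simp add: continuous_on_compose[of UNIV "g ^^ n" g, simplified] 
        continuous_on_subset)
qed

lemma dyadic_rep: "r \<in> dyadic \<Longrightarrow> \<exists>q0. \<forall>Q\<ge>q0. \<exists>p::int. r = of_int p / 2 ^ Q"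
proof -
  assume "r \<in> dyadic"
  then obtain p :: int and q :: nat where r: "r = of_int p / 2 ^ q" by (auto simp: dyadic_def)
  have "\<exists>p'::int. r = of_int p' / 2 ^ Q" if "Q \<ge> q" for Q
  proof -
    have "(2::real) ^ Q = 2 ^ q * 2 ^ (Q - q)" using that by (simp flip: power_add)
    then have "r = of_int (p * 2 ^ (Q - q)) / 2 ^ Q" using r by simp
    then show ?thesis by blast
  qed
  then show ?thesis by blast
qed

lemma dyadic_common2: "r \<in> dyadic \<Longrightarrow> s \<in> dyadic \<Longrightarrow> Q0 \<le> Q \<Longrightarrow> \<exists>Q p p'. Q0 \<le> Q \<and> r = of_int p / 2 ^ Q \<and> s = of_int p' / 2 ^ Q"
proof -
  assume "r \<in> dyadic" "s \<in> dyadic"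
  then obtain q1 q2 where 1: "\<forall>Q\<ge>q1. \<exists>p::int. r = of_int p / 2 ^ Q"
    and 2: "\<forall>Q\<ge>q2. \<exists>p::int. s = of_int p / 2 ^ Q" using dyadic_rep by metis
  then show ?thesis by (meson max.cobounded1 max.cobounded2 le_trans)
qed

lemma dyadic_I: "of_int p / 2 ^ q \<in> dyadic" by (auto simp: dyadic_def)

lemma dyadic_int: "of_int n \<in> dyadic"
  using dyadic_I[of n 0] by simp

lemma dyadic_add: "r \<in> dyadic \<Longrightarrow> s \<in> dyadic \<Longrightarrow> r + s \<in> dyadic"
  using dyadic_common2[of r s 0 0]
  by (auto simp: add_divide_distrib[symmetric] simp del: of_int_add simp flip: of_int_add intro: dyadic_I)

lemma dyadic_powi: "s \<in> dyadic \<Longrightarrow> 2 powi n * s \<in> dyadic"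
proof -
  assume "s \<in> dyadic"
  then obtain p :: int and q :: nat where s: "s = of_int p / 2 ^ q" by (auto simp: dyadic_def)
  show ?thesis
  proof (cases "0 \<le> n")
    case True
    then have "2 powi n * s = of_int (2 ^ nat n * p) / 2 ^ q"
      using s by (simp add: power_int_def)
    then show ?thesis by (metis dyadic_I)
  next
    case False
    then have "2 powi n * s = of_int p / 2 ^ (q + nat (-n))"
      using s by (simp add: power_int_def power_add field_simps)
    then show ?thesis by (metis dyadic_I)
  qed
qed

locale fl =
  fixes f :: "real \<Rightarrow> real"
  assumes hom: "\<exists>g. homeomorphism UNIV UNIV f g"
    and sm: "strict_mono f"
    and sh: "\<And>x. f (x + 1) = f x + 2"
    and f0: "f 0 = 0"
begin

lemma bij_f: "bij f"
  using hom unfolding homeomorphism_def bij_def inj_def by (metis UNIV_I image_eqI)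

lemma invf1[simp]: "inv f (f x) = x"
  using bij_f by (simp add: bij_is_inj)

lemma invf2[simp]: "f (inv f y) = y"
  using bij_f by (simp add: bij_is_surj surj_f_inv_f)

lemma cont_f: "continuous_on UNIV f"
  using hom unfolding homeomorphism_def by blast

lemma cont_invf: "continuous_on UNIV (inv f)"
proof -
  obtain g where g: "homeomorphism UNIV UNIV f g" using hom by blast
  have "g = inv f"
  proof
    fix y
    have "f (g y) = y" using g unfolding homeomorphism_def by auto
    then show "g y = inv f y" by (metis invf1)
  qed
  then show ?thesis using g unfolding homeomorphism_def by blast
qed

lemma sm_inv: "strict_mono (inv f)"
  unfolding strict_mono_def
proof (intro allI impI)
  fix x y :: real assume "x < y"
  show "inv f x < inv f y"
  proof (rule ccontr)
    assume "\<not> inv f x < inv f y"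
    then have "f (inv f y) \<le> f (inv f x)" using sm by (meson not_less strict_mono_less)
    then show False using \<open>x < y\<close> by simp
  qed
qed

lemma f_nat: "f (x + of_nat n) = f x + 2 * of_nat n"
proof (induction n)
  case (Suc n)
  have "f (x + of_nat (Suc n)) = f ((x + of_nat n) + 1)" by (simp add: algebra_simps)
  also have "\<dots> = f x + 2 * of_nat (Suc n)" using Suc by (simp add: sh)
  finally show ?case .
qed simp

lemma f_int: "f (x + of_int m) = f x + 2 * of_int m"
proof (cases "0 \<le> m")
  case True
  then show ?thesis using f_nat[of x "nat m"] by simp
next
  case False
  have "f ((x + of_int m) + of_nat (nat (-m))) = f (x + of_int m) + 2 * of_nat (nat (-m))"
    by (rule f_nat)
  then show ?thesis using False by simp
qed

lemma invf_int: "inv f (y + 2 * of_int m) = inv f y + of_int m"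
  by (metis f_int invf1 invf2)

lemma fpow_0: "(f ^^ d) 0 = 0"
  by (induction d) (auto simp: f0)

lemma key_T: "(inv f ^^ d) ((f ^^ d) y + of_int p * 2 ^ d) = y + of_int p"
proof (induction d)
  case (Suc d)
  have "(inv f ^^ Suc d) ((f ^^ Suc d) y + of_int p * 2 ^ Suc d)
      = (inv f ^^ d) (inv f (f ((f ^^ d) y) + 2 * of_int (p * 2 ^ d)))"
  proof -
    have e1: "inv f ^^ Suc d = (inv f ^^ d) \<circ> inv f" by (rule funpow_Suc_right)
    have e2: "(f ^^ Suc d) y = f ((f ^^ d) y)" by simp
    show ?thesis by (simp only: e1 e2 comp_apply) (simp add: algebra_simps)
  qed
  also have "\<dots> = (inv f ^^ d) ((f ^^ d) y + of_int p * 2 ^ d)"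
    using invf_int[of "f ((f ^^ d) y)" "p * 2 ^ d"] by simp
  finally show ?case using Suc by simp
qed simp

lemma key_D: "(inv f ^^ d) (of_int p * 2 ^ d) = of_int p"
  using key_T[of d 0 p] by (simp add: fpow_0)

lemma funpow_lr: "(inv f ^^ q) ((f ^^ q) x) = x"
proof (induction q)
  case (Suc q)
  have e1: "inv f ^^ Suc q = (inv f ^^ q) \<circ> inv f" by (rule funpow_Suc_right)
  have e2: "(f ^^ Suc q) x = f ((f ^^ q) x)" by simp
  show ?case by (simp only: e1 e2 comp_apply invf1 Suc)
qed simp

lemma funpow_rl: "(f ^^ q) ((inv f ^^ q) x) = x"
proof (induction q)
  case (Suc q)
  have e1: "f ^^ Suc q = (f ^^ q) \<circ> f" by (rule funpow_Suc_right)
  have e2: "(inv f ^^ Suc q) x = inv f ((inv f ^^ q) x)" by simp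
  show ?case by (simp only: e1 e2 comp_apply invf2 Suc)
qed simp

lemma rep_same:
  assumes "(of_int p :: real) / 2 ^ q = of_int p' / 2 ^ q'" "q \<le> q'"
  shows "p' = p * 2 ^ (q' - q)"
proof -
  have "(2::real) ^ q' = 2 ^ q * 2 ^ (q' - q)" using assms(2) by (simp flip: power_add)
  then have "(of_int p' :: real) = of_int (p * 2 ^ (q' - q))"
    using assms(1) by (simp add: field_simps)
  then show ?thesis by linarith
qed

lemma dbar_rep_eq:
  assumes "(of_int p :: real) / 2 ^ q = of_int p' / 2 ^ q'"
  shows "(inv f ^^ q) (of_int p) = (inv f ^^ q') (of_int p')"
proof -
  have *: "(inv f ^^ q) (of_int p) = (inv f ^^ q') (of_int p')"
    if "(of_int p :: real) / 2 ^ q = of_int p' / 2 ^ q'" "q \<le> q'" for p q p' q'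
  proof -
    have p': "p' = p * 2 ^ (q' - q)" using rep_same that by blast
    have q': "q' = q + (q' - q)" using that by simp
    have "(inv f ^^ q') (of_int p') = (inv f ^^ q) ((inv f ^^ (q' - q)) (of_int p * 2 ^ (q' - q)))"
      using p' by (subst q') (simp add: funpow_add)
    then show ?thesis by (simp add: key_D)
  qed
  show ?thesis using *[OF assms] *[OF assms[symmetric]] by (cases "q \<le> q'") auto
qed

lemma dbar_eq: "dbar f (of_int p / 2 ^ q) = (inv f ^^ q) (of_int p)"
  unfolding dbar_def
  by (rule the_equality) (auto intro: dbar_rep_eq)

lemma thT_rep_eq:
  assumes "(of_int p :: real) / 2 ^ q = of_int p' / 2 ^ q'"
  shows "(inv f ^^ q) \<circ> (\<lambda>t. t + of_int p) \<circ> (f ^^ q) = (inv f ^^ q') \<circ> (\<lambda>t. t + of_int p') \<circ> (f ^^ q')"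
proof -
  have *: "(inv f ^^ q) \<circ> (\<lambda>t. t + of_int p) \<circ> (f ^^ q) = (inv f ^^ q') \<circ> (\<lambda>t. t + of_int p') \<circ> (f ^^ q')"
    if "(of_int p :: real) / 2 ^ q = of_int p' / 2 ^ q'" "q \<le> q'" for p q p' q'
  proof
    fix t
    have p': "p' = p * 2 ^ (q' - q)" using rep_same that by blast
    have q'a: "inv f ^^ q' = (inv f ^^ q) \<circ> (inv f ^^ (q' - q))"
      using that by (metis funpow_add le_add_diff_inverse)
    have q'b: "f ^^ q' = (f ^^ (q' - q)) \<circ> (f ^^ q)"
      using that by (metis funpow_add le_add_diff_inverse2)
    show "((inv f ^^ q) \<circ> (\<lambda>t. t + of_int p) \<circ> (f ^^ q)) t = ((inv f ^^ q') \<circ> (\<lambda>t. t + of_int p') \<circ> (f ^^ q')) t"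
      by (simp add: q'a q'b p' key_T)
  qed
  show ?thesis using *[OF assms] *[OF assms[symmetric]] by (cases "q \<le> q'") auto
qed

lemma thT_eq: "theta_T f (of_int p / 2 ^ q) = (inv f ^^ q) \<circ> (\<lambda>t. t + of_int p) \<circ> (f ^^ q)"
  unfolding theta_T_def
  by (rule the_equality) (auto intro: thT_rep_eq)

lemma dbar_int: "dbar f (of_int n) = of_int n"
  using dbar_eq[of n 0] by simp

lemma dbar_less: "r \<in> dyadic \<Longrightarrow> s \<in> dyadic \<Longrightarrow> r < s \<Longrightarrow> dbar f r < dbar f s"
proof -
  assume "r \<in> dyadic" "s \<in> dyadic" "r < s"
  then obtain Q p p' where r: "r = of_int p / 2 ^ Q" and s: "s = of_int p' / 2 ^ Q"
    using dyadic_common2[of r s 0 0] by auto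
  then have "p < p'" using \<open>r < s\<close> by (simp add: divide_less_cancel)
  then show ?thesis using strict_mono_funpow[OF sm_inv, of Q]
    by (simp add: r s dbar_eq strict_mono_def)
qed

lemma dbar_le: "r \<in> dyadic \<Longrightarrow> s \<in> dyadic \<Longrightarrow> r \<le> s \<Longrightarrow> dbar f r \<le> dbar f s"
  using dbar_less by (cases "r = s") (auto simp: less_le)

end



context fl
begin

lemma fpow_dbar:
  assumes "s \<in> dyadic"
  shows "fpow f n (dbar f s) = dbar f (2 powi n * s)"
proof (cases "0 \<le> n")
  case True
  define N where "N = nat n"
  obtain q0 where q0: "\<forall>Q\<ge>q0. \<exists>p::int. s = of_int p / 2 ^ Q" using dyadic_rep assms by blast
  obtain P :: int where P: "s = of_int P / 2 ^ (N + q0)" using q0[rule_format, of "N + q0"] by auto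
  have "fpow f n (dbar f s) = (f ^^ N) ((inv f ^^ N) ((inv f ^^ q0) (of_int P)))"
    using True by (simp add: fpow_def N_def P dbar_eq funpow_add)
  also have "\<dots> = dbar f (of_int P / 2 ^ q0)" by (simp add: funpow_rl dbar_eq)
  also have "of_int P / 2 ^ q0 = 2 powi n * s"
    using True by (simp add: P N_def power_int_def power_add)
  finally show ?thesis .
next
  case False
  define N where "N = nat (-n)"
  obtain p :: int and q :: nat where P: "s = of_int p / 2 ^ q" using assms by (auto simp: dyadic_def)
  have "fpow f n (dbar f s) = (inv f ^^ (N + q)) (of_int p)"
    using False by (simp add: fpow_def N_def P dbar_eq funpow_add)
  also have "\<dots> = dbar f (of_int p / 2 ^ (N + q))" by (simp add: dbar_eq)
  also have "of_int p / 2 ^ (N + q) = 2 powi n * s"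
    using False by (simp add: P N_def power_int_def power_add field_simps)
  finally show ?thesis .
qed

lemma thT_dbar:
  assumes "r \<in> dyadic" "u \<in> dyadic"
  shows "theta_T f r (dbar f u) = dbar f (u + r)"
proof -
  obtain Q p P where r: "r = of_int p / 2 ^ Q" and u: "u = of_int P / 2 ^ Q"
    using dyadic_common2[OF assms, of 0 0] by auto
  have "theta_T f r (dbar f u) = (inv f ^^ Q) (of_int (P + p))"
    by (simp add: r u thT_eq dbar_eq funpow_rl)
  also have "\<dots> = dbar f (u + r)"
    using dbar_eq[of "P + p" Q] by (simp add: r u add_divide_distrib)
  finally show ?thesis .
qed

lemma thGA_dbar:
  assumes "r \<in> dyadic" "s \<in> dyadic"
  shows "theta_GA f n r (dbar f s) = dbar f (2 powi n * s + r)"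
  using assms by (simp add: theta_GA_def fpow_dbar thT_dbar dyadic_powi)

lemma fpow_mono: "strict_mono (fpow f n)"
  by (simp add: fpow_def strict_mono_funpow sm sm_inv)

lemma fpow_cont: "continuous_on UNIV (fpow f n)"
  by (simp add: fpow_def cont_funpow cont_f cont_invf)

lemma thT_props:
  assumes "r \<in> dyadic"
  shows "strict_mono (theta_T f r) \<and> continuous_on UNIV (theta_T f r)"
proof -
  obtain p :: int and q :: nat where r: "r = of_int p / 2 ^ q" using assms by (auto simp: dyadic_def)
  have m: "strict_mono ((inv f ^^ q) \<circ> (\<lambda>t. t + of_int p) \<circ> (f ^^ q))"
    using strict_mono_funpow[OF sm_inv, of q] strict_mono_funpow[OF sm, of q]
    by (simp add: strict_mono_def)
  have c: "continuous_on UNIV ((inv f ^^ q) \<circ> (\<lambda>t. t + of_int p) \<circ> (f ^^ q))"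
    unfolding comp_def
    by (rule continuous_on_compose2[OF cont_funpow[OF cont_invf, of q]])
      (auto intro!: continuous_intros cont_funpow[OF cont_f, of q])
  show ?thesis using m c by (simp add: r thT_eq)
qed

lemma thGA_mono: "r \<in> dyadic \<Longrightarrow> strict_mono (theta_GA f n r)"
  using thT_props[of r] fpow_mono[of n] by (simp add: theta_GA_def strict_mono_def)

lemma thGA_cont: "r \<in> dyadic \<Longrightarrow> continuous_on UNIV (theta_GA f n r)"
proof -
  assume "r \<in> dyadic"
  then have "continuous_on UNIV (theta_T f r)" using thT_props by blast
  then show ?thesis unfolding theta_GA_def comp_def
    by (rule continuous_on_compose2[OF _ fpow_cont]) auto
qed

end



lemma int_smono:
  assumes "\<And>k. (s::int \<Rightarrow> real) k < s (k + 1)"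
  shows "strict_mono s"
proof -
  have "s i < s (i + 1 + int n)" for i n
  proof (induction n)
    case 0 then show ?case using assms by simp
  next
    case (Suc n)
    have "s (i + 1 + int n) < s (i + 1 + int n + 1)" by (rule assms)
    then show ?case using Suc by (simp add: add.assoc)
  qed
  note * = this
  show ?thesis unfolding strict_mono_def
  proof (intro allI impI)
    fix i j :: int assume "i < j"
    then have "j = i + 1 + int (nat (j - i - 1))" by simp
    then show "s i < s j" using *[of i "nat (j - i - 1)"] by simp
  qed
qed

lemma piece:
  fixes s :: "int \<Rightarrow> real"
  assumes sm: "strict_mono s" and up: "\<And>M. \<exists>k. M < s k" and dn: "\<And>M. \<exists>k. s k \<le> M"
  shows "\<exists>j. s j \<le> z \<and> z < s (j + 1)"
proof -
  obtain m where m: "z < s m" using up by blast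
  obtain n where n: "s n \<le> z" using dn by blast
  have "\<forall>n. s n \<le> z \<longrightarrow> z < s (n + int d) \<longrightarrow> (\<exists>j. s j \<le> z \<and> z < s (j + 1))" for d
  proof (induction d)
    case 0 then show ?case by auto
  next
    case (Suc d)
    show ?case
    proof (intro allI impI)
      fix n assume a: "s n \<le> z" "z < s (n + int (Suc d))"
      show "\<exists>j. s j \<le> z \<and> z < s (j + 1)"
      proof (cases "s (n + 1) \<le> z")
        case True
        moreover have "n + int (Suc d) = (n + 1) + int d" by simp
        ultimately show ?thesis using Suc a by presburger
      next
        case False
        then show ?thesis using a by auto
      qed
    qed
  qed
  moreover have "n < m" using m n sm by (meson le_less_trans not_less strict_mono_less)
  then have "m = n + int (nat (m - n))" by simp
  ultimately show ?thesis using m n by (metis (no_types))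
qed

lemma smono_surj_cont:
  fixes F :: "real \<Rightarrow> real"
  assumes sm: "strict_mono F" and su: "surj F"
  shows "continuous_on UNIV F"
  unfolding continuous_on_iff
proof (intro ballI allI impI)
  fix x e :: real assume "0 < e"
  obtain s1 where s1: "F s1 = F x - e" using su by (metis UNIV_I image_iff)
  obtain s2 where s2: "F s2 = F x + e" using su by (metis UNIV_I image_iff)
  have "F s1 < F x" using s1 \<open>0 < e\<close> by simp
  then have "s1 < x" using sm by (simp add: strict_mono_less)
  have "F x < F s2" using s2 \<open>0 < e\<close> by simp
  then have "x < s2" using sm by (simp add: strict_mono_less)
  show "\<exists>d>0. \<forall>x'\<in>UNIV. dist x' x < d \<longrightarrow> dist (F x') (F x) < e"
  proof (intro exI conjI ballI impI)
    show "0 < min (x - s1) (s2 - x)" using \<open>s1 < x\<close> \<open>x < s2\<close> by simp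
    fix x' assume "dist x' x < min (x - s1) (s2 - x)"
    then have "s1 < x'" "x' < s2" by (auto simp: dist_real_def)
    then have "F s1 < F x'" "F x' < F s2" using sm by (auto simp: strict_mono_less)
    then show "dist (F x') (F x) < e" using s1 s2 by (auto simp: dist_real_def)
  qed
qed

lemma smono_surj_homeo:
  fixes F :: "real \<Rightarrow> real"
  assumes sm: "strict_mono F" and su: "surj F"
  shows "\<exists>g. homeomorphism UNIV UNIV F g"
proof -
  have inj: "inj F" using sm strict_mono_imp_inj_on by blast
  have b: "bij F" using inj su by (simp add: bij_def)
  have sm2: "strict_mono (inv F)"
    unfolding strict_mono_def
  proof (intro allI impI)
    fix x y :: real assume "x < y"
    show "inv F x < inv F y"
    proof (rule ccontr)
      assume "\<not> inv F x < inv F y"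
      then have "F (inv F y) \<le> F (inv F x)" using sm by (meson not_less strict_mono_less)
      then show False using \<open>x < y\<close> su by (simp add: surj_f_inv_f)
    qed
  qed
  have su2: "surj (inv F)" using b by (simp add: bij_imp_bij_inv bij_is_surj)
  show ?thesis
    apply (rule exI[of _ "inv F"])
    unfolding homeomorphism_def
    using smono_surj_cont[OF sm su] smono_surj_cont[OF sm2 su2] su su2 inj
    by (auto simp: surj_f_inv_f)
qed




lemma affine_eq:
  assumes "2 powi n * z1 + r = 2 powi n' * z1 + (r'::real)"
    and "2 powi n * z2 + r = 2 powi n' * z2 + r'" and "z1 \<noteq> z2"
  shows "n = n' \<and> r = r'"
proof -
  have "(2 powi n - 2 powi n') * (z1 - z2) = (0::real)"
    using assms(1,2) by (simp add: algebra_simps)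
  then have e: "(2::real) powi n = 2 powi n'" using assms(3) by simp
  have "n = n'"
  proof (rule ccontr)
    assume "n \<noteq> n'"
    then have "n < n' \<or> n' < n" by auto
    then show False using e power_int_strict_increasing[of n n' "2::real"]
        power_int_strict_increasing[of n' n "2::real"] by auto
  qed
  then show ?thesis using assms(1) by simp
qed

lemma affine_interval:
  fixes h :: "real \<Rightarrow> real"
  assumes ch: "continuous_on UNIV h"
    and loc: "\<And>y. y \<notin> B \<Longrightarrow> \<exists>e>0. \<exists>(n::int) r. r \<in> dyadic \<and> (\<forall>z\<in>ball y e. h z = 2 powi n * z + r)"
    and cd: "c < d" and noB: "\<And>y. c < y \<Longrightarrow> y < d \<Longrightarrow> y \<notin> B"
  shows "\<exists>n r. r \<in> dyadic \<and> (\<forall>z\<in>{c..d}. h z = 2 powi n * z + r)"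
proof -
  define A where "A = {c<..<d}"
  define Q where "Q y p \<longleftrightarrow> snd p \<in> dyadic \<and> (\<exists>e>0. \<forall>z\<in>ball y e. h z = 2 powi (fst p) * z + snd p)"
    for y :: real and p :: "int \<times> real"
  define P where "P y = (SOME p. Q y p)" for y
  have QP: "Q y (P y)" if yA: "y \<in> A" for y
  proof -
    obtain e n r where "e > 0" "r \<in> dyadic" "\<forall>z\<in>ball y e. h z = 2 powi n * z + r"
      using loc[of y] noB yA unfolding A_def by auto
    then have "Q y (n, r)" unfolding Q_def by auto
    then show ?thesis unfolding P_def by (rule someI)
  qed
  have lc: "\<forall>a\<in>A. eventually (\<lambda>b. P a = P b) (at a within A)"
  proof
    fix a assume aA: "a \<in> A"
    obtain e where e: "e > 0" "\<forall>z\<in>ball a e. h z = 2 powi (fst (P a)) * z + snd (P a)"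
      using QP[OF aA] unfolding Q_def by auto
    show "eventually (\<lambda>b. P a = P b) (at a within A)"
      unfolding eventually_at
    proof (intro exI conjI ballI impI)
      show "0 < e" by fact
      fix b assume b: "b \<in> A" "b \<noteq> a \<and> dist b a < e"
      obtain e' where e': "e' > 0" "\<forall>z\<in>ball b e'. h z = 2 powi (fst (P b)) * z + snd (P b)"
        using QP[OF b(1)] unfolding Q_def by auto
      define \<delta> where "\<delta> = min e' (e - dist b a) / 2"
      have "\<delta> > 0" using b e' by (simp add: \<delta>_def)
      have i1: "b \<in> ball a e" "b \<in> ball b e'" using b e' by (auto simp: dist_commute)
      have d1: "\<delta> < e - dist b a" "\<delta> < e'" using \<open>\<delta> > 0\<close> unfolding \<delta>_def by (simp_all add: min_def split: if_splits)
      have i2: "b + \<delta> \<in> ball a e" "b + \<delta> \<in> ball b e'"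
        using d1 \<open>\<delta> > 0\<close> by (auto simp: dist_real_def abs_if split: if_splits)
      have "fst (P a) = fst (P b) \<and> snd (P a) = snd (P b)"
        apply (rule affine_eq[of _ b _ _ _ "b + \<delta>"])
        using e(2)[rule_format, OF i1(1)] e'(2)[rule_format, OF i1(2)]
          e(2)[rule_format, OF i2(1)] e'(2)[rule_format, OF i2(2)] \<open>\<delta> > 0\<close> by auto
      then show "P a = P b" by (simp add: prod_eq_iff)
    qed
  qed
  define m where "m = (c + d) / 2"
  have mA: "m \<in> A" using cd by (simp add: A_def m_def)
  have conA: "connected A" by (simp add: A_def)
  have allA: "\<forall>z\<in>A. h z = 2 powi (fst (P m)) * z + snd (P m)"
  proof
    fix z assume zA: "z \<in> A"
    have "P m = P z" using connected_local_const[OF conA mA zA lc] .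
    moreover obtain e where "e > 0" "\<forall>w\<in>ball z e. h w = 2 powi (fst (P z)) * w + snd (P z)"
      using QP[OF zA] unfolding Q_def by auto
    ultimately show "h z = 2 powi (fst (P m)) * z + snd (P m)" by auto
  qed
  define g where "g z = h z - (2 powi (fst (P m)) * z + snd (P m))" for z
  have cg: "continuous_on (closure A) g"
    unfolding g_def by (intro continuous_intros continuous_on_subset[OF ch]) auto
  have clA: "closure A = {c..d}" using cd by (simp add: A_def)
  have "\<forall>z\<in>{c..d}. h z = 2 powi (fst (P m)) * z + snd (P m)"
  proof
    fix z assume "z \<in> {c..d}"
    then have zc: "z \<in> closure A" using clA by simp
    have "g z \<le> 0" by (rule continuous_le_on_closure[OF cg zc]) (simp add: g_def allA)
    moreover have "g z \<ge> 0" by (rule continuous_ge_on_closure[OF cg zc]) (simp add: g_def allA)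
    ultimately show "h z = 2 powi (fst (P m)) * z + snd (P m)" by (simp add: g_def)
  qed
  moreover have "snd (P m) \<in> dyadic" using QP[OF mA] unfolding Q_def by auto
  ultimately show ?thesis by blast
qed




lemma not_limpt_B:
  fixes B :: "real set"
  assumes "finite (B \<inter> ball z e)" "e > 0"
  shows "\<not> z islimpt B"
proof
  assume "z islimpt B"
  moreover have "eventually (\<lambda>y. y \<in> ball z e) (at z)"
    using assms(2) unfolding eventually_at by (auto simp: dist_commute)
  ultimately have "z islimpt B \<inter> ball z e" by (rule islimpt_Int_eventually)
  then show False using islimpt_finite[OF assms(1)] by simp
qed

lemma finite_S:
  fixes B :: "real set"
  assumes lf: "\<forall>y. \<exists>e>0. finite (B \<inter> ball y e)"
  shows "finite ((B \<union> range real_of_int) \<inter> {u..v})"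
proof -
  have fB: "finite ({u..v} \<inter> B)"
    by (rule finite_not_islimpt_in_compact) (use lf not_limpt_B in auto)
  have fI: "finite (range real_of_int \<inter> {u..v})"
  proof (rule finite_subset)
    show "range real_of_int \<inter> {u..v} \<subseteq> real_of_int ` {\<lfloor>u\<rfloor>..\<lceil>v\<rceil>}"
    proof
      fix t assume "t \<in> range real_of_int \<inter> {u..v}"
      then obtain n where n: "t = of_int n" "u \<le> of_int n" "of_int n \<le> v" by auto
      then have "\<lfloor>u\<rfloor> \<le> n" "n \<le> \<lceil>v\<rceil>" by (auto simp: floor_le_iff le_ceiling_iff)
      then show "t \<in> real_of_int ` {\<lfloor>u\<rfloor>..\<lceil>v\<rceil>}" using n by auto
    qed
  qed simp
  have "(B \<union> range real_of_int) \<inter> {u..v} = ({u..v} \<inter> B) \<union> (range real_of_int \<inter> {u..v})" by auto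
  then show ?thesis using fB fI by simp
qed

lemma decomp_exists:
  assumes "h \<in> PL2"
  shows "\<exists>x a b. PL_decomp h x a b"
proof -
  obtain g where hg: "homeomorphism UNIV UNIV h g" using assms by (auto simp: PL2_def)
  have ch: "continuous_on UNIV h" using hg by (simp add: homeomorphism_def)
  obtain B where Bd: "B \<subseteq> dyadic" and lf: "\<forall>y. \<exists>e>0. finite (B \<inter> ball y e)"
    and loc: "\<forall>y. y \<notin> B \<longrightarrow> (\<exists>e>0. \<exists>(n::int) r. r \<in> dyadic \<and> (\<forall>z\<in>ball y e. h z = 2 powi n * z + r))"
    using assms by (auto simp: PL2_def)
  define S where "S = B \<union> range real_of_int"
  have fS: "finite (S \<inter> {u..v})" for u v unfolding S_def by (rule finite_S[OF lf])
  have Sd: "S \<subseteq> dyadic" using Bd by (auto simp: S_def dyadic_int)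
  define nxt where "nxt y = Min (S \<inter> {y<..y+1})" for y
  define prv where "prv y = Max (S \<inter> {y-1..<y})" for y
  have nxt: "y < nxt y \<and> nxt y \<in> S \<and> (\<forall>s\<in>S. \<not> (y < s \<and> s < nxt y))" for y
  proof -
    have fin: "finite (S \<inter> {y<..y+1})" by (rule finite_subset[OF _ fS[of y "y+1"]]) auto
    have "real_of_int (\<lfloor>y\<rfloor> + 1) \<in> S" unfolding S_def by blast
    moreover have "real_of_int (\<lfloor>y\<rfloor> + 1) \<in> {y<..y+1}" by (simp; linarith?)
    ultimately have "of_int (\<lfloor>y\<rfloor> + 1) \<in> S \<inter> {y<..y+1}" by blast
    then have ne: "S \<inter> {y<..y+1} \<noteq> {}" by blast
    have m: "nxt y \<in> S \<inter> {y<..y+1}" unfolding nxt_def using Min_in[OF fin ne] .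
    have "\<not> (y < s \<and> s < nxt y)" if "s \<in> S" for s
    proof
      assume a: "y < s \<and> s < nxt y"
      then have "s \<in> S \<inter> {y<..y+1}" using m that by auto
      then have "nxt y \<le> s" unfolding nxt_def using fin by simp
      then show False using a by simp
    qed
    then show ?thesis using m by auto
  qed
  have prv: "prv y < y \<and> prv y \<in> S \<and> (\<forall>s\<in>S. \<not> (prv y < s \<and> s < y))" for y
  proof -
    have fin: "finite (S \<inter> {y-1..<y})" by (rule finite_subset[OF _ fS[of "y-1" y]]) auto
    have "real_of_int (\<lceil>y\<rceil> - 1) \<in> S" unfolding S_def by blast
    moreover have "real_of_int (\<lceil>y\<rceil> - 1) \<in> {y-1..<y}" by (simp; linarith?)
    ultimately have "of_int (\<lceil>y\<rceil> - 1) \<in> S \<inter> {y-1..<y}" by blast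
    then have ne: "S \<inter> {y-1..<y} \<noteq> {}" by blast
    have m: "prv y \<in> S \<inter> {y-1..<y}" unfolding prv_def using Max_in[OF fin ne] .
    have "\<not> (prv y < s \<and> s < y)" if "s \<in> S" for s
    proof
      assume a: "prv y < s \<and> s < y"
      then have "s \<in> S \<inter> {y-1..<y}" using m that by auto
      then have "s \<le> prv y" unfolding prv_def using fin by simp
      then show False using a by simp
    qed
    then show ?thesis using m by auto
  qed
  define x where "x k = (if 0 \<le> k then (nxt ^^ nat k) 0 else (prv ^^ nat (-k)) 0)" for k :: int
  have step: "(x (k+1) = nxt (x k)) \<or> (x k = prv (x (k+1)))" for k
  proof (cases "0 \<le> k")
    case True
    then have "nat (k+1) = Suc (nat k)" by simp
    then show ?thesis using True by (simp add: x_def)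
  next
    case False
    define m where "m = nat (- k - 1)"
    have "nat (-k) = Suc m" using False by (simp add: m_def)
    moreover have "x (k+1) = (prv ^^ m) 0" using False by (auto simp: x_def m_def)
    ultimately show ?thesis using False by (simp add: x_def)
  qed
  have gap: "x k < x (k+1) \<and> (\<forall>s\<in>S. \<not> (x k < s \<and> s < x (k+1)))" for k
    using step[of k] nxt[of "x k"] prv[of "x (k+1)"] by metis
  have xS: "x k \<in> S" for k
  proof -
    have z: "0 \<in> S" unfolding S_def by (metis UnI2 of_int_0 rangeI)
    have "(nxt ^^ n) 0 \<in> S" for n by (induction n) (use z nxt in auto)
    moreover have "(prv ^^ n) 0 \<in> S" for n by (induction n) (use z prv in auto)
    ultimately show ?thesis by (simp add: x_def)
  qed
  have smx: "strict_mono x" using gap by (intro int_smono) auto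
  have x0: "x 0 = 0" by (simp add: x_def)
  have up: "\<exists>k. M < x k" for M
  proof (rule ccontr)
    assume "\<not> (\<exists>k. M < x k)"
    then have a: "x k \<le> M" for k by (simp add: not_less)
    have "x (int n) \<in> S \<inter> {0..M}" for n
    proof -
      have "x 0 \<le> x (int n)" using smx by (simp add: strict_mono_less_eq)
      then show ?thesis using xS[of "int n"] a[of "int n"] x0 by simp
    qed
    then have "range (\<lambda>n::nat. x (int n)) \<subseteq> S \<inter> {0..M}" by blast
    then have "finite (range (\<lambda>n::nat. x (int n)))" using fS finite_subset by blast
    moreover have "inj (\<lambda>n::nat. x (int n))"
      using smx by (auto simp: inj_def strict_mono_eq)
    ultimately show False using finite_imageD by blast
  qed
  have dn: "\<exists>k. x k \<le> M" for M
  proof (rule ccontr)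
    assume "\<not> (\<exists>k. x k \<le> M)"
    then have a: "M \<le> x k" for k by (simp add: not_le less_imp_le)
    have "x (- int n) \<in> S \<inter> {M..0}" for n
    proof -
      have "x (- int n) \<le> x 0" using smx by (simp add: strict_mono_less_eq)
      then show ?thesis using xS[of "- int n"] a[of "- int n"] x0 by simp
    qed
    then have "range (\<lambda>n::nat. x (- int n)) \<subseteq> S \<inter> {M..0}" by blast
    then have "finite (range (\<lambda>n::nat. x (- int n)))" using fS finite_subset by blast
    moreover have "inj (\<lambda>n::nat. x (- int n))"
      using smx by (auto simp: inj_def strict_mono_eq)
    ultimately show False using finite_imageD by blast
  qed
  have lim1: "filterlim x at_top at_top"
    unfolding filterlim_at_top eventually_at_top_linorder
  proof
    fix Z
    obtain k where "Z < x k" using up by blast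
    then have "\<forall>n\<ge>k. Z \<le> x n" using smx by (auto simp: strict_mono_less_eq intro: order_trans[of Z "x k"] less_imp_le)
    then show "\<exists>N. \<forall>n\<ge>N. Z \<le> x n" by blast
  qed
  have lim2: "filterlim x at_bot at_bot"
    unfolding filterlim_at_bot eventually_at_bot_linorder
  proof
    fix Z
    obtain k where "x k \<le> Z" using dn by blast
    then have "\<forall>n\<le>k. x n \<le> Z" using smx by (auto simp: strict_mono_less_eq intro: order_trans[of _ "x k" Z])
    then show "\<exists>N. \<forall>n\<le>N. x n \<le> Z" by blast
  qed
  have aff: "\<forall>k. \<exists>p::int \<times> real. snd p \<in> dyadic \<and> (\<forall>z\<in>{x k..x (k+1)}. h z = 2 powi (fst p) * z + snd p)"
  proof
    fix k
    have "\<exists>n r. r \<in> dyadic \<and> (\<forall>z\<in>{x k..x (k+1)}. h z = 2 powi n * z + r)"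
    proof (rule affine_interval[OF ch, of B])
      show "\<And>y. y \<notin> B \<Longrightarrow> \<exists>e>0. \<exists>n r. r \<in> dyadic \<and> (\<forall>z\<in>ball y e. h z = 2 powi n * z + r)"
        using loc by blast
      show "x k < x (k+1)" using gap by blast
      show "\<And>y. x k < y \<Longrightarrow> y < x (k + 1) \<Longrightarrow> y \<notin> B" using gap[of k] by (auto simp: S_def)
    qed
    then show "\<exists>p::int \<times> real. snd p \<in> dyadic \<and> (\<forall>z\<in>{x k..x (k+1)}. h z = 2 powi (fst p) * z + snd p)"
      by auto
  qed
  then obtain F where F: "\<forall>k. snd (F k) \<in> dyadic \<and> (\<forall>z\<in>{x k..x (k+1)}. h z = 2 powi (fst (F k)) * z + snd (F k))"
    using choice[OF aff] by blast
  have "PL_decomp h x (\<lambda>k. fst (F k)) (\<lambda>k. snd (F k))"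
    unfolding PL_decomp_def using smx xS Sd lim1 lim2 F by auto
  then show ?thesis by blast
qed




context fl
begin

lemma dbar_unb:
  fixes s :: "int \<Rightarrow> real"
  assumes sd: "\<And>k. s k \<in> dyadic"
    and up: "\<And>M. \<exists>k. M \<le> s k" and dn: "\<And>M. \<exists>k. s k \<le> M"
  shows "(\<exists>k. M \<le> dbar f (s k)) \<and> (\<exists>k. dbar f (s k) \<le> M)"
proof
  obtain k where k: "of_int \<lceil>M\<rceil> \<le> s k" using up by blast
  have "dbar f (of_int \<lceil>M\<rceil>) \<le> dbar f (s k)" by (rule dbar_le[OF dyadic_int sd k])
  then show "\<exists>k. M \<le> dbar f (s k)" by (metis dbar_int le_of_int_ceiling order_trans)
next
  obtain k where k: "s k \<le> of_int \<lfloor>M\<rfloor>" using dn by blast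
  have "dbar f (s k) \<le> dbar f (of_int \<lfloor>M\<rfloor>)" by (rule dbar_le[OF sd dyadic_int k])
  then show "\<exists>k. dbar f (s k) \<le> M" by (metis dbar_int of_int_floor_le order_trans)
qed

lemma main:
  assumes hP: "h \<in> PL2"
  shows "\<exists>g. homeomorphism UNIV UNIV (theta_PL f h) g"
proof -
  obtain x a b where D: "PL_decomp h x a b" using decomp_exists[OF hP] by blast
  have smx: "strict_mono x" and xd: "\<And>k. x k \<in> dyadic" and bd: "\<And>k. b k \<in> dyadic"
    and aff: "\<And>k z. z \<in> {x k..x (k+1)} \<Longrightarrow> h z = 2 powi (a k) * z + b k"
    and l1: "filterlim x at_top at_top" and l2: "filterlim x at_bot at_bot"
    using D unfolding PL_decomp_def by auto
  obtain hg where hg: "homeomorphism UNIV UNIV h hg" using hP by (auto simp: PL2_def)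
  have hsurj: "\<exists>z. h z = y" for y using hg unfolding homeomorphism_def by (metis UNIV_I image_iff)
  have xup: "\<exists>k. M \<le> x k" for M
    using l1 unfolding filterlim_at_top eventually_at_top_linorder by blast
  have xdn: "\<exists>k. x k \<le> M" for M
    using l2 unfolding filterlim_at_bot eventually_at_bot_linorder by blast
  have xup': "\<exists>k. M < x k" for M using xup[of "M+1"] by (meson less_add_one order_less_le_trans)
  have hx0: "h (x k) = 2 powi (a k) * x k + b k" for k using aff[of "x k" k] smx
    by (simp add: strict_mono_less_eq)
  have hx1: "h (x (k+1)) = 2 powi (a k) * x (k+1) + b k" for k using aff[of "x (k+1)" k] smx
    by (simp add: strict_mono_less_eq)
  have hxd: "h (x k) \<in> dyadic" for k using hx0 by (simp add: dyadic_add dyadic_powi xd bd)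
  have hxm: "strict_mono (\<lambda>k. h (x k))"
  proof (rule int_smono)
    fix k
    have "x k < x (k+1)" using smx by (simp add: strict_mono_less)
    then have "2 powi (a k) * x k < 2 powi (a k) * x (k+1)" by simp
    then show "h (x k) < h (x (k+1))" using hx0 hx1 by simp
  qed
  define X where "X k = dbar f (x k)" for k
  define Y where "Y k = dbar f (h (x k))" for k
  define G where "G k = theta_GA f (a k) (b k)" for k
  have smX: "strict_mono X" unfolding X_def strict_mono_def using smx xd dbar_less
    by (simp add: strict_mono_less)
  have smY: "strict_mono Y" unfolding Y_def strict_mono_def
  proof (intro allI impI)
    fix i j :: int assume "i < j"
    then have "h (x i) < h (x j)" using hxm unfolding strict_mono_def by blast
    then show "dbar f (h (x i)) < dbar f (h (x j))" using dbar_less hxd by blast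
  qed
  have GX0: "G k (X k) = Y k" for k
    by (simp add: G_def X_def Y_def thGA_dbar xd bd hx0)
  have GX1: "G k (X (k+1)) = Y (k+1)" for k
    by (simp add: G_def X_def Y_def thGA_dbar xd bd hx1)
  have Gm: "strict_mono (G k)" for k by (simp add: G_def thGA_mono bd)
  have Gc: "continuous_on UNIV (G k)" for k by (simp add: G_def thGA_cont bd)
  have Xunb: "(\<exists>k. M \<le> X k) \<and> (\<exists>k. X k \<le> M)" for M
    unfolding X_def by (rule dbar_unb[OF xd xup xdn])
  have hxup: "\<exists>k. M \<le> h (x k)" for M
  proof -
    obtain z where z: "h z = M" using hsurj by blast
    obtain j where j: "x j \<le> z" "z < x (j+1)"
      using piece[OF smx xup' xdn] by blast
    have "h z = 2 powi (a j) * z + b j" using aff[of z j] j by simp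
    also have "\<dots> \<le> 2 powi (a j) * x (j+1) + b j" using j by simp
    finally show ?thesis using z hx1 by metis
  qed
  have hxdn: "\<exists>k. h (x k) \<le> M" for M
  proof -
    obtain z where z: "h z = M" using hsurj by blast
    obtain j where j: "x j \<le> z" "z < x (j+1)"
      using piece[OF smx xup' xdn] by blast
    have "2 powi (a j) * x j + b j \<le> 2 powi (a j) * z + b j" using j by simp
    also have "\<dots> = h z" using aff[of z j] j by simp
    finally show ?thesis using z hx0 by metis
  qed
  have Yunb: "(\<exists>k. M \<le> Y k) \<and> (\<exists>k. Y k \<le> M)" for M
    unfolding Y_def by (rule dbar_unb[OF hxd hxup hxdn])
  have Xup': "\<exists>k. M < X k" for M using Xunb[of "M+1"] by (meson less_add_one order_less_le_trans)
  have Yup': "\<exists>k. M < Y k" for M using Yunb[of "M+1"] by (meson less_add_one order_less_le_trans)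
  have Xpiece: "\<exists>j. X j \<le> t \<and> t < X (j+1)" for t
    using piece[OF smX Xup'] Xunb by blast
  have Ypiece: "\<exists>j. Y j \<le> t \<and> t < Y (j+1)" for t
    using piece[OF smY Yup'] Yunb by blast
  have val: "theta_PL f h t = G k t" if tk: "X k \<le> t" "t < X (k+1)" for t k
  proof -
    define R where "R y \<longleftrightarrow> (\<exists>x a b k. PL_decomp h x a b \<and>
      dbar f (x k) \<le> t \<and> t < dbar f (x (k+1)) \<and> y = theta_GA f (a k) (b k) t)" for y
    have "R (G k t)" unfolding R_def G_def
      by (rule exI[of _ x], rule exI[of _ a], rule exI[of _ b], rule exI[of _ k]) (use D tk in \<open>simp add: X_def\<close>)
    then have "R (theta_PL f h t)" unfolding theta_PL_def R_def[symmetric] by (rule someI)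
    then obtain x' a' b' k' where D': "PL_decomp h x' a' b'" and t': "dbar f (x' k') \<le> t" "t < dbar f (x' (k'+1))"
      and v: "theta_PL f h t = theta_GA f (a' k') (b' k') t" unfolding R_def by blast
    have x'd: "\<And>k. x' k \<in> dyadic" and aff': "\<And>k z. z \<in> {x' k..x' (k+1)} \<Longrightarrow> h z = 2 powi (a' k) * z + b' k"
      using D' unfolding PL_decomp_def by auto
    define u where "u = max (x k) (x' k')"
    define w where "w = min (x (k+1)) (x' (k'+1))"
    have ud: "u \<in> dyadic" and wd: "w \<in> dyadic" using xd x'd by (auto simp: u_def w_def max_def min_def)
    have "dbar f u \<le> t" using tk t' by (simp add: u_def X_def max_def)
    moreover have "t < dbar f w" using tk t' by (simp add: w_def X_def min_def)
    ultimately have "dbar f u < dbar f w" by simp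
    then have uw: "u < w" using dbar_le[OF wd ud] by (meson not_less)
    have i1: "u \<in> {x k..x (k+1)}" "u \<in> {x' k'..x' (k'+1)}" using uw by (auto simp: u_def w_def)
    have i2: "w \<in> {x k..x (k+1)}" "w \<in> {x' k'..x' (k'+1)}" using uw by (auto simp: u_def w_def)
    have "a k = a' k' \<and> b k = b' k'"
      apply (rule affine_eq[of _ u _ _ _ w])
      using aff[OF i1(1)] aff'[OF i1(2)] aff[OF i2(1)] aff'[OF i2(2)] uw by auto
    then show ?thesis using v by (simp add: G_def)
  qed
  have smF: "strict_mono (theta_PL f h)"
    unfolding strict_mono_def
  proof (intro allI impI)
    fix t1 t2 :: real assume lt: "t1 < t2"
    obtain k1 where k1: "X k1 \<le> t1" "t1 < X (k1+1)" using Xpiece by blast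
    obtain k2 where k2: "X k2 \<le> t2" "t2 < X (k2+1)" using Xpiece by blast
    have "k1 \<le> k2"
    proof (rule ccontr)
      assume "\<not> k1 \<le> k2"
      then have "k2 + 1 \<le> k1" by simp
      then have "X (k2+1) \<le> X k1" using smX by (simp add: strict_mono_less_eq)
      then show False using k1 k2 lt by simp
    qed
    show "theta_PL f h t1 < theta_PL f h t2"
    proof (cases "k1 = k2")
      case True
      then show ?thesis using val[OF k1] val[OF k2] Gm lt by (simp add: strict_mono_less)
    next
      case False
      then have "k1 + 1 \<le> k2" using \<open>k1 \<le> k2\<close> by simp
      then have "Y (k1+1) \<le> Y k2" using smY by (simp add: strict_mono_less_eq)
      moreover have "G k1 t1 < G k1 (X (k1+1))" using Gm k1 by (simp add: strict_mono_less)
      moreover have "G k2 (X k2) \<le> G k2 t2" using Gm k2 by (simp add: strict_mono_less_eq)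
      ultimately show ?thesis using val[OF k1] val[OF k2] GX0 GX1 by simp
    qed
  qed
  have suF: "surj (theta_PL f h)"
  proof -
    have "\<exists>t. theta_PL f h t = y" for y
    proof -
      obtain j where j: "Y j \<le> y" "y < Y (j+1)" using Ypiece by blast
      have le: "X j \<le> X (j+1)" using smX by (simp add: strict_mono_less_eq)
      obtain t where t: "X j \<le> t" "t \<le> X (j+1)" "G j t = y"
        using IVT'[of "G j" "X j" y "X (j+1)"] j le GX0 GX1 Gc continuous_on_subset by force
      have "t \<noteq> X (j+1)" using t j GX1 by auto
      then have "t < X (j+1)" using t by simp
      then show ?thesis using val[OF t(1)] t by auto
    qed
    then show ?thesis by (metis surj_def)
  qed
  show ?thesis by (rule smono_surj_homeo[OF smF suF])
qed

end


theorem mainTheorem5: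
  fixes f :: "real \<Rightarrow> real"
  assumes "\<exists>g. homeomorphism UNIV UNIV f g"
    and "strict_mono f"
    and "\<And>x. f (x + 1) = f x + 2"
    and "f 0 = 0"
    and "h \<in> PL2"
  shows "\<exists>g. homeomorphism UNIV UNIV (theta_PL f h) g"
proof -
  interpret fl f using assms(1-4) by unfold_locales
  show ?thesis by (rule main[OF assms(5)])
qed

end
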